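(* Let $P\subseteq\mathbb{C}$ be a finitely generated field extension of $\mathbb{Q}$, $C=P\cap\mu$, $a\in P^\times$ and $k>1$ an integer. The following are equivalent: (i) $a$ is $k$-simple in $P$; (ii) for every divisor $m>1$ of $k$ there are no $\alpha\in P$ and root of unity $\epsilon$ with $a=\alpha^m\epsilon$; (iii) for every divisor $m>1$ of $k$, the image of $a$ in the quotient group $P^{\times}/C$ has no $m$-th root in $P^\times/C$.
   Context: $\mu$ is the group of all roots of unity in $\mathbb{C}^\times$. For an integer $k>1$, a nonzero $a\in P$ is $k$-simple (in $P$) if $a\notin\mu$ and for all $b\in P$, $\epsilon\in\mu$ and integers $d$, $a^d=b^k\epsilon$ implies $k\mid d$. *)

theory Defs
  imports Complex_Main "HOL-Algebra.Coset"
begin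

definition roots_of_unity :: "complex set" where
  "roots_of_unity = {z. \<exists>n::nat. n > 0 \<and> z ^ n = 1}"

definition is_subfield :: "complex set \<Rightarrow> bool" where
  "is_subfield F \<longleftrightarrow> 0 \<in> F \<and> 1 \<in> F \<and>
     (\<forall>x\<in>F. \<forall>y\<in>F. x + y \<in> F \<and> x - y \<in> F \<and> x * y \<in> F) \<and>
     (\<forall>x\<in>F. x \<noteq> 0 \<longrightarrow> inverse x \<in> F)"

text \<open>Subfield of C finitely generated over Q (Q is contained in every subfield of C):
  the smallest subfield containing some finite set S.\<close>
definition fin_gen_field :: "complex set \<Rightarrow> bool" where
  "fin_gen_field P \<longleftrightarrow> is_subfield P \<and>
     (\<exists>S. finite S \<and> S \<subseteq> P \<and> P = \<Inter>{F. is_subfield F \<and> S \<subseteq> F})"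

definition k_simple :: "complex set \<Rightarrow> nat \<Rightarrow> complex \<Rightarrow> bool" where
  "k_simple P k a \<longleftrightarrow> a \<noteq> 0 \<and> a \<notin> roots_of_unity \<and>
     (\<forall>b\<in>P. \<forall>\<epsilon>\<in>roots_of_unity. \<forall>d::int.
        a powi d = b ^ k * \<epsilon> \<longrightarrow> int k dvd d)"

definition units_grp :: "complex set \<Rightarrow> complex monoid" where
  "units_grp P = \<lparr>carrier = P - {0}, monoid.mult = (*), one = 1\<rparr>"

end

theory Submission
  imports Defs
begin

lemma sf_pow: assumes "is_subfield P" "x \<in> P" shows "x ^ n \<in> P"
  using assms by (induction n) (auto simp: is_subfield_def)

lemma sf_powi: assumes "is_subfield P" "x \<in> P" "x \<noteq> 0" shows "x powi n \<in> P"
proof -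
  have "inverse x \<in> P" using assms by (auto simp: is_subfield_def)
  then show ?thesis using assms sf_pow by (auto simp: power_int_def)
qed

lemma rou_mult: "x \<in> roots_of_unity \<Longrightarrow> y \<in> roots_of_unity \<Longrightarrow> x * y \<in> roots_of_unity"
proof -
  assume "x \<in> roots_of_unity" "y \<in> roots_of_unity"
  then obtain n m :: nat where "n > 0" "x ^ n = 1" "m > 0" "y ^ m = 1"
    by (auto simp: roots_of_unity_def)
  have "(x*y) ^ (n*m) = (x ^ n) ^ m * (y ^ m) ^ n"
    by (simp add: power_mult_distrib power_mult[symmetric] mult.commute)
  also have "\<dots> = 1" using \<open>x ^ n = 1\<close> \<open>y ^ m = 1\<close> by simp
  finally have "(x*y) ^ (n*m) = 1" .
  moreover have "n * m > 0" using \<open>n>0\<close> \<open>m>0\<close> by simp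
  ultimately show ?thesis unfolding roots_of_unity_def by blast
qed

lemma rou_pow: assumes "x \<in> roots_of_unity" shows "x ^ j \<in> roots_of_unity"
proof (induction j)
  case 0
  then show ?case by (auto simp: roots_of_unity_def)
next
  case (Suc j)
  then show ?case using rou_mult[OF assms Suc.IH] by simp
qed

lemma rou_powi: "x \<in> roots_of_unity \<Longrightarrow> x powi j \<in> roots_of_unity"
proof -
  assume "x \<in> roots_of_unity"
  then obtain n :: nat where n: "n > 0" "x ^ n = 1" by (auto simp: roots_of_unity_def)
  have "(x powi j) ^ n = (x ^ n) powi j"
    by (simp add: power_int_power power_int_power' mult.commute)
  then have "(x powi j) ^ n = 1" using n by simp
  then show ?thesis using n by (auto simp: roots_of_unity_def)
qed

lemma rou_nz: "x \<in> roots_of_unity \<Longrightarrow> x \<noteq> 0"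
  by (auto simp: roots_of_unity_def zero_power)

lemma part1a:
  assumes "k_simple P k a" "m > 1" "m dvd k" "k > 1" "\<alpha> \<in> P" "\<epsilon> \<in> roots_of_unity"
    "a = \<alpha> ^ m * \<epsilon>"
  shows False
proof -
  obtain q where q: "k = m * q" using assms(3) by auto
  have "q > 0" using q assms(4) by (cases q) auto
  have "q < k" using q assms(2) \<open>q>0\<close> by simp
  have "a powi (int q) = \<alpha> ^ k * \<epsilon> ^ q"
    using assms(7) q by (simp add: power_mult_distrib power_mult)
  moreover have "\<epsilon> ^ q \<in> roots_of_unity" using rou_pow assms(6) by blast
  ultimately have "int k dvd int q" using assms(1,5) unfolding k_simple_def by blast
  then have "k dvd q" by simp
  then show False using \<open>q>0\<close> \<open>q<k\<close> by (simp add: nat_dvd_not_less)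
qed

lemma part1b:
  assumes sf: "is_subfield P" and aP: "a \<in> P" and a0: "a \<noteq> 0" and k1: "k > 1"
    and H: "\<forall>m::nat. m > 1 \<and> m dvd k \<longrightarrow>
               \<not> (\<exists>\<alpha>\<in>P. \<exists>\<epsilon>\<in>roots_of_unity. a = \<alpha> ^ m * \<epsilon>)"
  shows "k_simple P k a"
proof -
  have "1 \<in> P" using sf by (simp add: is_subfield_def)
  have nr: "a \<notin> roots_of_unity"
  proof
    assume "a \<in> roots_of_unity"
    moreover have "a = 1 ^ k * a" by simp
    moreover have "\<not> (\<exists>\<alpha>\<in>P. \<exists>\<epsilon>\<in>roots_of_unity. a = \<alpha> ^ k * \<epsilon>)"
      using H k1 by simp
    ultimately show False using \<open>1 \<in> P\<close> by blast
  qed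
  have "int k dvd d" if b: "b \<in> P" and e: "\<epsilon> \<in> roots_of_unity" and eq: "a powi d = b ^ k * \<epsilon>"
    for b \<epsilon> d
  proof (rule ccontr)
    assume nd: "\<not> int k dvd d"
    define g where "g = gcd d (int k)"
    have gpos: "g > 0" using k1 by (simp add: g_def)
    obtain d' where d': "d = g * d'" unfolding g_def by (meson gcd_dvd1 dvdE)
    obtain m' where m': "int k = g * m'" unfolding g_def by (meson gcd_dvd2 dvdE)
    have "g * m' > 0" using m' k1 by linarith
    hence m'pos: "m' > 0" using gpos by (simp add: zero_less_mult_iff)
    have "m' \<noteq> 1" using nd m' d' by auto
    hence m'gt: "m' > 1" using m'pos by simp
    have "gcd d' m' = 1"
    proof -
      have "gcd (g*d') (g*m') = gcd d (int k)" using d' m' by simp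
      then have "g = gcd (g*d') (g*m')" unfolding g_def by simp
      also have "\<dots> = \<bar>g\<bar> * gcd d' m'" by (rule gcd_mult_distrib_int[symmetric])
      finally show ?thesis using gpos by simp
    qed
    then obtain u v where uv: "u * d' + v * m' = 1" using bezout_int[of d' m'] by auto
    define m where "m = nat m'"
    define gn where "gn = nat g"
    have mm: "int m = m'" using m'pos by (simp add: m_def)
    have gg: "int gn = g" using gpos by (simp add: gn_def)
    have kk: "k = gn * m" using m' mm gg by (metis of_nat_eq_iff of_nat_mult)
    have "a powi d \<noteq> 0" using a0 by simp
    hence b0: "b \<noteq> 0" using eq k1 by (auto simp: zero_power)
    define t where "t = a powi d' / b ^ m"
    have "t ^ gn = (a powi d') ^ gn / (b ^ m) ^ gn"
      by (simp add: t_def power_divide)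
    also have "(b ^ m) ^ gn = b ^ k" using kk by (simp add: power_mult[symmetric] mult.commute)
    also have "(a powi d') ^ gn = a powi (d' * int gn)"
      by (rule power_int_power')
    also have "d' * int gn = d" using d' gg by simp
    finally have "t ^ gn = \<epsilon>" using eq b0 by simp
    then obtain n :: nat where n: "n > 0" "\<epsilon> ^ n = 1" using e by (auto simp: roots_of_unity_def)
    have "t ^ (gn * n) = 1" using n \<open>t ^ gn = \<epsilon>\<close> by (simp add: power_mult)
    moreover have "gn * n > 0" using gg gpos n by simp
    ultimately have trou: "t \<in> roots_of_unity" unfolding roots_of_unity_def by blast
    have ad: "a powi d' = b ^ m * t" using b0 by (simp add: t_def)
    have e1: "a powi (d' * u) = (b powi u) ^ m * t powi u"
    proof -
      have "a powi (d' * u) = (a powi d') powi u" by (rule power_int_mult)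
      also have "\<dots> = (b ^ m) powi u * t powi u" using ad by (simp add: power_int_mult_distrib)
      also have "(b ^ m) powi u = b powi (int m * u)" by (rule power_int_power)
      also have "\<dots> = b powi (u * int m)" by (simp add: mult.commute)
      also have "\<dots> = (b powi u) ^ m" by (rule power_int_power'[symmetric])
      finally show ?thesis .
    qed
    have e2: "a powi (v * m') = (a powi v) ^ m"
      using power_int_power'[of a v m] mm by simp
    have "a = a powi (d' * u + v * m')" using uv by (simp add: mult.commute)
    also have "\<dots> = a powi (d' * u) * a powi (v * m')"
      using a0 by (rule power_int_add[OF disjI1])
    also have "\<dots> = (b powi u * a powi v) ^ m * t powi u"
      unfolding e1 e2 by (simp add: power_mult_distrib)
    finally have "a = (b powi u * a powi v) ^ m * t powi u" .
    moreover have "b powi u * a powi v \<in> P"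
      using sf_powi[OF sf b b0] sf_powi[OF sf aP a0] sf by (simp add: is_subfield_def)
    moreover have "t powi u \<in> roots_of_unity" using trou rou_powi by blast
    moreover have "m > 1" "m dvd k" using mm m'gt kk by auto
    moreover have "\<not> (\<exists>\<alpha>\<in>P. \<exists>\<epsilon>\<in>roots_of_unity. a = \<alpha> ^ m * \<epsilon>)"
      using H \<open>m > 1\<close> \<open>m dvd k\<close> by simp
    ultimately show False by blast
  qed
  then show ?thesis using a0 nr unfolding k_simple_def by blast
qed

lemma ug_simps[simp]: "carrier (units_grp P) = P - {0}" "x \<otimes>\<^bsub>units_grp P\<^esub> y = x * y"
  "\<one>\<^bsub>units_grp P\<^esub> = 1"
  by (simp_all add: units_grp_def)

lemma ug_pow[simp]: "x [^]\<^bsub>units_grp P\<^esub> (n::nat) = x ^ n"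
  by (induction n) simp_all

lemma ug_group: assumes sf: "is_subfield P" shows "comm_group (units_grp P)"
proof (rule comm_groupI)
  fix x y assume "x \<in> carrier (units_grp P)" "y \<in> carrier (units_grp P)"
  then show "x \<otimes>\<^bsub>units_grp P\<^esub> y \<in> carrier (units_grp P)" using sf
    by (auto simp: is_subfield_def)
next
  show "\<one>\<^bsub>units_grp P\<^esub> \<in> carrier (units_grp P)" using sf by (auto simp: is_subfield_def)
next
  fix x assume x: "x \<in> carrier (units_grp P)"
  then have "inverse x \<in> carrier (units_grp P)" using sf by (auto simp: is_subfield_def)
  moreover have "inverse x \<otimes>\<^bsub>units_grp P\<^esub> x = \<one>\<^bsub>units_grp P\<^esub>" using x by simp
  ultimately show "\<exists>y\<in>carrier (units_grp P). y \<otimes>\<^bsub>units_grp P\<^esub> x = \<one>\<^bsub>units_grp P\<^esub>"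
    by blast
qed (simp_all add: mult.assoc mult.commute)

lemma C_normal: assumes sf: "is_subfield P"
  shows "(P \<inter> roots_of_unity) \<lhd> units_grp P"
proof -
  interpret G: comm_group "units_grp P" using ug_group[OF sf] .
  have inv: "inv\<^bsub>units_grp P\<^esub> x = inverse x" if "x \<in> P - {0}" for x
  proof -
    have "inverse x \<in> carrier (units_grp P)" using sf that by (auto simp: is_subfield_def)
    then show ?thesis using that by (intro G.inv_equality) auto
  qed
  have "subgroup (P \<inter> roots_of_unity) (units_grp P)"
  proof
    show "P \<inter> roots_of_unity \<subseteq> carrier (units_grp P)" using rou_nz by auto
    show "\<one>\<^bsub>units_grp P\<^esub> \<in> P \<inter> roots_of_unity" using sf
      by (auto simp: is_subfield_def roots_of_unity_def)
    fix x y assume x: "x \<in> P \<inter> roots_of_unity" and y: "y \<in> P \<inter> roots_of_unity"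
    show "x \<otimes>\<^bsub>units_grp P\<^esub> y \<in> P \<inter> roots_of_unity"
      using x y sf rou_mult by (auto simp: is_subfield_def)
    have "inverse x \<in> roots_of_unity" using rou_powi[of x "-1"] x by simp
    then show "inv\<^bsub>units_grp P\<^esub> x \<in> P \<inter> roots_of_unity"
      using x sf inv[of x] rou_nz[of x] by (auto simp: is_subfield_def)
  qed
  then show ?thesis by (rule G.subgroup_imp_normal)
qed

lemma part2:
  assumes sf: "is_subfield P" and aP: "a \<in> P" and a0: "a \<noteq> 0" and m0: "m > 0"
  defines "C \<equiv> P \<inter> roots_of_unity"
  shows "(\<exists>\<alpha>\<in>P. \<exists>\<epsilon>\<in>roots_of_unity. a = \<alpha> ^ m * \<epsilon>) \<longleftrightarrow>
         (\<exists>y\<in>carrier (units_grp P Mod C).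
                    y [^]\<^bsub>units_grp P Mod C\<^esub> m = C #>\<^bsub>units_grp P\<^esub> a)"
proof -
  interpret N: normal C "units_grp P" using C_normal[OF sf] unfolding C_def .
  have aG: "a \<in> carrier (units_grp P)" using aP a0 by simp
  show ?thesis
  proof
    assume "\<exists>\<alpha>\<in>P. \<exists>\<epsilon>\<in>roots_of_unity. a = \<alpha> ^ m * \<epsilon>"
    then obtain \<alpha> \<epsilon> where al: "\<alpha> \<in> P" and e: "\<epsilon> \<in> roots_of_unity" and eq: "a = \<alpha> ^ m * \<epsilon>"
      by blast
    have al0: "\<alpha> \<noteq> 0" using eq a0 m0 by (auto simp: zero_power)
    have "\<alpha> ^ m \<in> P" using sf_pow[OF sf al] .
    have "\<epsilon> = a * inverse (\<alpha> ^ m)" using eq al0 by simp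
    moreover have "inverse (\<alpha> ^ m) \<in> P" using \<open>\<alpha> ^ m \<in> P\<close> al0 sf by (auto simp: is_subfield_def)
    ultimately have "\<epsilon> \<in> P" using aP sf by (auto simp: is_subfield_def)
    hence eC: "\<epsilon> \<in> C" using e by (simp add: C_def)
    have alG: "\<alpha> \<in> carrier (units_grp P)" using al al0 by simp
    have amG: "\<alpha> ^ m \<in> carrier (units_grp P)" using \<open>\<alpha> ^ m \<in> P\<close> al0 by simp
    have "a \<in> C #>\<^bsub>units_grp P\<^esub> (\<alpha> ^ m)"
      unfolding r_coset_def using eC eq by (auto simp: mult.commute)
    hence "C #>\<^bsub>units_grp P\<^esub> (\<alpha> ^ m) = C #>\<^bsub>units_grp P\<^esub> a"
      using N.repr_independence amG N.subgroup_axioms by blast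
    moreover have "(C #>\<^bsub>units_grp P\<^esub> \<alpha>) [^]\<^bsub>units_grp P Mod C\<^esub> m
        = C #>\<^bsub>units_grp P\<^esub> (\<alpha> ^ m)"
      using N.FactGroup_pow[OF alG, of m] by simp
    moreover have "C #>\<^bsub>units_grp P\<^esub> \<alpha> \<in> carrier (units_grp P Mod C)"
      using alG by (simp add: carrier_FactGroup)
    ultimately show "\<exists>y\<in>carrier (units_grp P Mod C).
                    y [^]\<^bsub>units_grp P Mod C\<^esub> m = C #>\<^bsub>units_grp P\<^esub> a" by metis
  next
    assume "\<exists>y\<in>carrier (units_grp P Mod C).
                    y [^]\<^bsub>units_grp P Mod C\<^esub> m = C #>\<^bsub>units_grp P\<^esub> a"
    then obtain y where y: "y \<in> carrier (units_grp P Mod C)"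
      and yeq: "y [^]\<^bsub>units_grp P Mod C\<^esub> m = C #>\<^bsub>units_grp P\<^esub> a" by blast
    obtain x where xG: "x \<in> carrier (units_grp P)" and yx: "y = C #>\<^bsub>units_grp P\<^esub> x"
      using y by (auto simp: carrier_FactGroup)
    have "C #>\<^bsub>units_grp P\<^esub> (x ^ m) = C #>\<^bsub>units_grp P\<^esub> a"
      using yeq N.FactGroup_pow[OF xG, of m] yx by simp
    moreover have "1 \<in> C" using sf by (auto simp: C_def is_subfield_def roots_of_unity_def)
    ultimately have "a \<in> C #>\<^bsub>units_grp P\<^esub> (x ^ m)"
      unfolding r_coset_def by force
    then obtain h where "h \<in> C" "a = h * x ^ m" unfolding r_coset_def by auto
    moreover have "x \<in> P" using xG by simp
    ultimately show "\<exists>\<alpha>\<in>P. \<exists>\<epsilon>\<in>roots_of_unity. a = \<alpha> ^ m * \<epsilon>"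
      by (auto simp: C_def mult.commute)
  qed
qed

theorem lemma2p8:
  fixes P :: "complex set" and a :: complex and k :: nat
  assumes "fin_gen_field P"
    and "a \<in> P" and "a \<noteq> 0"
    and "k > 1"
  defines "C \<equiv> P \<inter> roots_of_unity"
  shows "(k_simple P k a \<longleftrightarrow>
            (\<forall>m::nat. m > 1 \<and> m dvd k \<longrightarrow>
               \<not> (\<exists>\<alpha>\<in>P. \<exists>\<epsilon>\<in>roots_of_unity. a = \<alpha> ^ m * \<epsilon>)))
       \<and> ((\<forall>m::nat. m > 1 \<and> m dvd k \<longrightarrow>
               \<not> (\<exists>\<alpha>\<in>P. \<exists>\<epsilon>\<in>roots_of_unity. a = \<alpha> ^ m * \<epsilon>)) \<longleftrightarrow>
          (\<forall>m::nat. m > 1 \<and> m dvd k \<longrightarrow>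
               \<not> (\<exists>y\<in>carrier (units_grp P Mod C).
                    y [^]\<^bsub>units_grp P Mod C\<^esub> m = C #>\<^bsub>units_grp P\<^esub> a)))"
proof -
  have sf: "is_subfield P" using assms(1) by (simp add: fin_gen_field_def)
  have 1: "k_simple P k a \<longleftrightarrow>
            (\<forall>m::nat. m > 1 \<and> m dvd k \<longrightarrow>
               \<not> (\<exists>\<alpha>\<in>P. \<exists>\<epsilon>\<in>roots_of_unity. a = \<alpha> ^ m * \<epsilon>))"
    using part1a[of P k a] part1b[OF sf assms(2,3,4)] assms(4) by blast
  have 2: "\<And>m. m > 0 \<Longrightarrow> (\<exists>\<alpha>\<in>P. \<exists>\<epsilon>\<in>roots_of_unity. a = \<alpha> ^ m * \<epsilon>) \<longleftrightarrow>
         (\<exists>y\<in>carrier (units_grp P Mod C).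
                    y [^]\<^bsub>units_grp P Mod C\<^esub> m = C #>\<^bsub>units_grp P\<^esub> a)"
    unfolding C_def by (rule part2[OF sf assms(2,3)])
  have 3: "(m > 1 \<and> m dvd k \<longrightarrow>
               \<not> (\<exists>\<alpha>\<in>P. \<exists>\<epsilon>\<in>roots_of_unity. a = \<alpha> ^ m * \<epsilon>)) \<longleftrightarrow>
          (m > 1 \<and> m dvd k \<longrightarrow>
               \<not> (\<exists>y\<in>carrier (units_grp P Mod C).
                    y [^]\<^bsub>units_grp P Mod C\<^esub> m = C #>\<^bsub>units_grp P\<^esub> a))" for m
  proof (cases "m > 1")
    case True
    then show ?thesis using 2[of m] by simp
  qed simp
  show ?thesis using 1 3 by blast
qed

end
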